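(* Let $A=\mathbb{F}_q[t]$ and let $f_1,\ldots,f_r,g\in A$ be non-constant. The number of polynomial functions from $A/f_1A\times\cdots\times A/f_rA$ to $A/gA$ is $$N(f_1,\ldots,f_r;g)=\prod_{\mathbf{k}}q^{\deg\frac{g}{\gcd\left(g,\prod_{i=1}^r\prod_{j=0}^{k_i-1}(a_{k_i}-a_j)\right)}},$$ where the product is over all $\mathbf{k}=(k_1,\ldots,k_r)\in\mathbb{N}^r$ with $0\le k_i<\mu(f_i,g)$ for each $1\le i\le r$.
   Context: Write $\mathbb{F}_q=\{a_0=0,a_1,\ldots,a_{q-1}\}$. For $k\in\mathbb{N}$ with base-$q$ expansion $k=c_0+c_1q+\cdots+c_hq^h$ ($0\le c_s<q$), define $a_k=a_{c_0}+a_{c_1}t+\cdots+a_{c_h}t^h\in A$. Thus $\{a_0,\ldots,a_{q^d-1}\}$ is the set of polynomials of degree $<d$. For each $i$, $A/f_iA$ is identified with the complete residue system of polynomials of degree $<\deg f_i$. A function $f$ from $A/f_1A\times\cdots\times A/f_rA$ to $A/gA$ is a polynomial function if there is $F\in A[x_1,\ldots,x_r]$ with $F(b_1,\ldots,b_r)\equiv f(b_1,\ldots,b_r)\pmod g$ for all $(b_1,\ldots,b_r)$ with $\deg b_i<\deg f_i$ for each $i$. $\lambda(g)$ is the smallest positive integer $k$ such that $g\mid\prod_{j=0}^{k-1}(a_k-a_j)$, and $\mu(f_i,g)=\min(q^{\deg f_i},\lambda(g))$. *)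

theory Defs
  imports "HOL-Computational_Algebra.Computational_Algebra" "HOL-Library.FuncSet"
begin

text \<open>Enumeration of F_q: \<open>enum :: nat \<Rightarrow> 'a\<close> lists a_0 = 0, a_1, ..., a_{q-1}.
  The polynomial a_k has as coefficient of t^s the element enum(c_s), where c_s is the
  s-th base-q digit of k. Since k < q^(k+1), digits with index s > k vanish, and enum 0 = 0.\<close>
definition a_poly :: "(nat \<Rightarrow> 'a::{field,finite}) \<Rightarrow> nat \<Rightarrow> 'a poly" where
  "a_poly enum k = (\<Sum>s\<le>k. monom (enum ((k div card (UNIV :: 'a set) ^ s) mod card (UNIV :: 'a set))) s)"

definition lambda_fn :: "(nat \<Rightarrow> 'a::{field,finite}) \<Rightarrow> 'a poly \<Rightarrow> nat" where
  "lambda_fn enum g = (LEAST k. 0 < k \<and> g dvd (\<Prod>j<k. a_poly enum k - a_poly enum j))"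

definition mu_fn :: "(nat \<Rightarrow> 'a::{field,finite}) \<Rightarrow> 'a poly \<Rightarrow> 'a poly \<Rightarrow> nat" where
  "mu_fn enum f g = min (card (UNIV :: 'a set) ^ degree f) (lambda_fn enum g)"

definition dom_res :: "'a::field poly list \<Rightarrow> 'a poly list set" where
  "dom_res fs = {bs. length bs = length fs \<and> (\<forall>i<length fs. degree (bs ! i) < degree (fs ! i))}"

definition res_sys :: "'a::field poly \<Rightarrow> 'a poly set" where
  "res_sys g = {b. degree b < degree g}"

text \<open>A multivariate polynomial F in A[x_1,...,x_r] is given by a finite set E of exponent
  vectors (lists of length r) and coefficients c; its value at bs is
  sum_{e in E} c e * prod_{i<r} (bs!i)^(e!i).\<close>
definition mpoly_eval :: "nat list set \<Rightarrow> (nat list \<Rightarrow> 'a::comm_ring_1 poly) \<Rightarrow> 'a poly list \<Rightarrow> 'a poly" where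
  "mpoly_eval E c bs = (\<Sum>e\<in>E. c e * (\<Prod>i<length bs. (bs ! i) ^ (e ! i)))"

definition is_poly_function :: "'a::field poly list \<Rightarrow> 'a poly \<Rightarrow> ('a poly list \<Rightarrow> 'a poly) \<Rightarrow> bool" where
  "is_poly_function fs g h \<longleftrightarrow>
     (\<exists>E c. finite E \<and> (\<forall>e\<in>E. length e = length fs) \<and>
        (\<forall>bs\<in>dom_res fs. mpoly_eval E c bs mod g = h bs mod g))"

definition num_poly_functions :: "'a::field poly list \<Rightarrow> 'a poly \<Rightarrow> nat" where
  "num_poly_functions fs g =
     card {h \<in> dom_res fs \<rightarrow>\<^sub>E res_sys g. is_poly_function fs g h}"

end

theory Submission
  imports Defs
begin


locale aenum =
  fixes enum :: "nat \<Rightarrow> 'a::{field_gcd,finite}"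
  assumes bij: "bij_betw enum {..<card (UNIV :: 'a set)} (UNIV :: 'a set)"
    and e0: "enum 0 = 0"
begin

abbreviation a where "a \<equiv> a_poly enum"

lemma q_ge2: "2 \<le> card (UNIV::'a set)"
proof -
  have "card {0::'a, 1} = 2" by simp
  moreover have "card {0::'a,1} \<le> card (UNIV::'a set)" by (rule card_mono) auto
  ultimately show ?thesis by simp
qed

lemma q_pos: "0 < card (UNIV::'a set)" using q_ge2 by simp

lemma k_less_qpow: "k < s \<Longrightarrow> k < card (UNIV::'a set) ^ s"
proof -
  assume "k < s"
  also have "s < 2 ^ s" by (rule less_exp)
  also have "(2::nat) ^ s \<le> card (UNIV::'a set) ^ s" using q_ge2 by (rule power_mono) simp
  finally show ?thesis .
qed

lemma coeff_a: "coeff (a k) s = enum (k div card (UNIV::'a set) ^ s mod card (UNIV::'a set))"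
proof -
  have "coeff (a k) s = (\<Sum>s'\<le>k. if s' = s then enum (k div card (UNIV::'a set) ^ s' mod card (UNIV::'a set)) else 0)"
    unfolding a_poly_def by (simp add: coeff_sum coeff_monom)
  also have "\<dots> = (if s \<le> k then enum (k div card (UNIV::'a set) ^ s mod card (UNIV::'a set)) else 0)"
    by (simp add: sum.delta')
  also have "\<dots> = enum (k div card (UNIV::'a set) ^ s mod card (UNIV::'a set))"
  proof (cases "s \<le> k")
    case False
    then have "k < card (UNIV::'a set) ^ s" by (intro k_less_qpow) simp
    then show ?thesis using False e0 by simp
  qed simp
  finally show ?thesis .
qed

lemma a_rec: "a k = pCons (enum (k mod card (UNIV::'a set))) (a (k div card (UNIV::'a set)))"
proof (rule poly_eqI)
  fix n show "coeff (a k) n = coeff (pCons (enum (k mod card (UNIV::'a set))) (a (k div card (UNIV::'a set)))) n"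
    by (cases n) (simp_all add: coeff_a div_mult2_eq mult.commute)
qed

lemma a0[simp]: "a 0 = 0"
  unfolding a_poly_def using e0 by simp

lemma enum_inj: "i < card (UNIV::'a set) \<Longrightarrow> j < card (UNIV::'a set) \<Longrightarrow> enum i = enum j \<Longrightarrow> i = j"
  using bij unfolding bij_betw_def inj_on_def by auto

lemma enum_surj: "\<exists>i<card (UNIV::'a set). enum i = c"
  using bij unfolding bij_betw_def by (metis UNIV_I imageE lessThan_iff)

lemma a_eq0: "a j = 0 \<Longrightarrow> j = 0"
proof (induction j rule: less_induct)
  case (less j)
  have "pCons (enum (j mod card (UNIV::'a set))) (a (j div card (UNIV::'a set))) = 0"
    using less.prems a_rec[of j] by simp
  then have h1: "enum (j mod card (UNIV::'a set)) = enum 0" and h2: "a (j div card (UNIV::'a set)) = 0"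
    using e0 by auto
  from h1 have jm: "j mod card (UNIV::'a set) = 0" using enum_inj q_pos by simp
  show ?case
  proof (rule ccontr)
    assume "j \<noteq> 0"
    then have "j div card (UNIV::'a set) < j" using q_ge2 by simp
    then have jd: "j div card (UNIV::'a set) = 0" using less.IH h2 by blast
    have "j = card (UNIV::'a set) * (j div card (UNIV::'a set)) + j mod card (UNIV::'a set)" by simp
    also have "\<dots> = 0" using jd jm by simp
    finally show False using \<open>j \<noteq> 0\<close> by simp
  qed
qed

lemma a_inj: "a k = a j \<Longrightarrow> k = j"
proof (induction k arbitrary: j rule: less_induct)
  case (less k)
  show ?case
  proof (cases "k = 0")
    case True
    then show ?thesis using less.prems a_eq0 by simp
  next
    case False
    have "pCons (enum (k mod card (UNIV::'a set))) (a (k div card (UNIV::'a set))) =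
          pCons (enum (j mod card (UNIV::'a set))) (a (j div card (UNIV::'a set)))"
      using less.prems a_rec[of k] a_rec[of j] by simp
    then have h1: "enum (k mod card (UNIV::'a set)) = enum (j mod card (UNIV::'a set))"
      and h2: "a (k div card (UNIV::'a set)) = a (j div card (UNIV::'a set))" by auto
    from h1 have m: "k mod card (UNIV::'a set) = j mod card (UNIV::'a set)" using enum_inj q_pos by simp
    have "k div card (UNIV::'a set) < k" using False q_ge2 by simp
    then have d: "k div card (UNIV::'a set) = j div card (UNIV::'a set)" using less.IH h2 by blast
    have "k = card (UNIV::'a set) * (k div card (UNIV::'a set)) + k mod card (UNIV::'a set)" by simp
    also have "\<dots> = card (UNIV::'a set) * (j div card (UNIV::'a set)) + j mod card (UNIV::'a set)"
      using m d by simp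
    also have "\<dots> = j" by simp
    finally show ?thesis .
  qed
qed

lemma div_q_less: "w < card (UNIV::'a set) ^ Suc d \<Longrightarrow> w div card (UNIV::'a set) < card (UNIV::'a set) ^ d"
  using q_pos by (simp add: less_mult_imp_div_less mult.commute)

lemma a_deg: "w < card (UNIV::'a set) ^ d \<Longrightarrow> a w = 0 \<or> degree (a w) < d"
proof (induction d arbitrary: w)
  case 0 then show ?case by simp
next
  case (Suc d)
  have "w div card (UNIV::'a set) < card (UNIV::'a set) ^ d" using Suc.prems by (rule div_q_less)
  then have ih: "a (w div card (UNIV::'a set)) = 0 \<or> degree (a (w div card (UNIV::'a set))) < d" by (rule Suc.IH)
  show ?case
  proof (cases "a (w div card (UNIV::'a set)) = 0")
    case True then show ?thesis by (subst a_rec) simp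
  next
    case False then show ?thesis using ih by (subst a_rec) simp
  qed
qed

lemma a_deg': "w < card (UNIV::'a set) ^ d \<Longrightarrow> 0 < d \<Longrightarrow> degree (a w) < d"
  using a_deg by fastforce

lemma a_surj: "r = 0 \<or> degree r < d \<Longrightarrow> \<exists>w<card (UNIV::'a set) ^ d. a w = r"
proof (induction d arbitrary: r)
  case 0 then show ?case by (intro exI[of _ 0]) auto
next
  case (Suc d)
  obtain c r' where r: "r = pCons c r'" by (cases r) auto
  have "r' = 0 \<or> degree r' < d" using Suc.prems r by (cases "r' = 0") auto
  then obtain w' where w': "w' < card (UNIV::'a set) ^ d" "a w' = r'" using Suc.IH by blast
  obtain i where i: "i < card (UNIV::'a set)" "enum i = c" using enum_surj by blast
  define w where "w = i + card (UNIV::'a set) * w'"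
  have "w mod card (UNIV::'a set) = i" "w div card (UNIV::'a set) = w'" using i q_pos by (simp_all add: w_def)
  then have "a w = r" using r w' i by (subst a_rec) simp
  moreover have "w < card (UNIV::'a set) ^ Suc d"
  proof -
    have "w < card (UNIV::'a set) + card (UNIV::'a set) * w'" using i by (simp add: w_def)
    also have "\<dots> = card (UNIV::'a set) * (w' + 1)" by simp
    also have "\<dots> \<le> card (UNIV::'a set) * card (UNIV::'a set) ^ d" using w' by (intro mult_le_mono2) simp
    finally show ?thesis by simp
  qed
  ultimately show ?case by blast
qed

lemma a_split: "w < card (UNIV::'a set) ^ d \<Longrightarrow> a (i * card (UNIV::'a set) ^ d + w) = monom 1 d * a i + a w"
proof (induction d arbitrary: w)
  case 0 then show ?case by simp
next
  case (Suc d)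
  have e: "i * card (UNIV::'a set) ^ Suc d + w = card (UNIV::'a set) * (i * card (UNIV::'a set) ^ d) + w"
    by (simp add: power_Suc mult.left_commute)
  have m: "(i * card (UNIV::'a set) ^ Suc d + w) mod card (UNIV::'a set) = w mod card (UNIV::'a set)"
    unfolding e by simp
  have dv: "(i * card (UNIV::'a set) ^ Suc d + w) div card (UNIV::'a set) = i * card (UNIV::'a set) ^ d + w div card (UNIV::'a set)"
    unfolding e using q_pos by simp
  have "w div card (UNIV::'a set) < card (UNIV::'a set) ^ d" using Suc.prems by (rule div_q_less)
  then have ih: "a (i * card (UNIV::'a set) ^ d + w div card (UNIV::'a set)) = monom 1 d * a i + a (w div card (UNIV::'a set))"
    by (rule Suc.IH)
  have "a (i * card (UNIV::'a set) ^ Suc d + w) = pCons (enum (w mod card (UNIV::'a set))) (monom 1 d * a i + a (w div card (UNIV::'a set)))"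
    by (subst a_rec) (simp only: m dv ih)
  also have "\<dots> = monom 1 (Suc d) * a i + pCons (enum (w mod card (UNIV::'a set))) (a (w div card (UNIV::'a set)))"
    by (simp add: monom_Suc)
  also have "\<dots> = monom 1 (Suc d) * a i + a w" by (subst (2) a_rec) simp
  finally show ?case .
qed

end


lemma card_swap:
  assumes "finite A" "finite B"
  shows "(\<Sum>j\<in>A. card {e\<in>B. R j e}) = (\<Sum>e\<in>B. card {j\<in>A. R j e})"
proof -
  have c: "\<And>X P. finite X \<Longrightarrow> card {x\<in>X. P x} = (\<Sum>x\<in>X. if P x then 1 else 0)"
    by (simp add: sum.inter_filter[symmetric])
  show ?thesis using assms by (simp add: c sum.swap[of _ A B])
qed

lemma mult_as_card:
  fixes p z :: "'b::factorial_semiring"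
  assumes "z \<noteq> 0" "\<not> is_unit p" "multiplicity p z \<le> M"
  shows "multiplicity p z = card {e\<in>{1..M}. p ^ e dvd z}"
proof -
  have h: "\<And>e. p ^ e dvd z \<longleftrightarrow> e \<le> multiplicity p z"
    by (rule power_dvd_iff_le_multiplicity[OF assms(1,2)])
  have "{e\<in>{1..M}. p ^ e dvd z} = {1..multiplicity p z}"
  proof (rule set_eqI)
    fix e show "e \<in> {e\<in>{1..M}. p ^ e dvd z} \<longleftrightarrow> e \<in> {1..multiplicity p z}"
      using assms(3) h[of e] by auto
  qed
  then show ?thesis by simp
qed

lemma dvd_by_counts:
  fixes x y :: "nat \<Rightarrow> 'b::field_gcd poly"
  assumes nzx: "\<forall>j<k. x j \<noteq> 0" and nzy: "\<forall>j<k. y j \<noteq> 0"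
    and cnt: "\<And>m. 0 < degree m \<Longrightarrow> card {j\<in>{..<k}. m dvd x j} \<le> card {j\<in>{..<k}. m dvd y j}"
  shows "(\<Prod>j<k. x j) dvd (\<Prod>j<k. y j)"
proof (rule multiplicity_le_imp_dvd)
  show "(\<Prod>j<k. x j) \<noteq> 0" using nzx by simp
next
  fix p :: "'b poly" assume pr: "prime p"
  then have pe: "prime_elem p" by simp
  have nu: "\<not> is_unit p" using pr by (simp add: prime_def prime_elem_def)
  have p0: "p \<noteq> 0" using pr by auto
  have dp: "0 < degree p" using nu p0 by (simp add: is_unit_iff_degree)
  define M where "M = (\<Sum>j<k. multiplicity p (x j)) + (\<Sum>j<k. multiplicity p (y j))"
  have Mx: "multiplicity p (x j) \<le> M" if "j < k" for j
  proof -
    have "multiplicity p (x j) \<le> (\<Sum>j<k. multiplicity p (x j))"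
      using that by (intro member_le_sum) auto
    then show ?thesis unfolding M_def by simp
  qed
  have My: "multiplicity p (y j) \<le> M" if "j < k" for j
  proof -
    have "multiplicity p (y j) \<le> (\<Sum>j<k. multiplicity p (y j))"
      using that by (intro member_le_sum) auto
    then show ?thesis unfolding M_def by simp
  qed
  have "multiplicity p (\<Prod>j<k. x j) = (\<Sum>j<k. multiplicity p (x j))"
    using nzx by (intro prime_elem_multiplicity_prod_distrib pe) auto
  also have "\<dots> = (\<Sum>j<k. card {e\<in>{1..M}. p ^ e dvd x j})"
    using nzx Mx nu by (intro sum.cong refl mult_as_card) auto
  also have "\<dots> = (\<Sum>e\<in>{1..M}. card {j\<in>{..<k}. p ^ e dvd x j})"
    by (rule card_swap) auto
  also have "\<dots> \<le> (\<Sum>e\<in>{1..M}. card {j\<in>{..<k}. p ^ e dvd y j})"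
  proof (rule sum_mono)
    fix e assume "e \<in> {1..M}"
    then have "0 < degree (p ^ e)" using dp p0 by (simp add: degree_power_eq)
    then show "card {j\<in>{..<k}. p ^ e dvd x j} \<le> card {j\<in>{..<k}. p ^ e dvd y j}" by (rule cnt)
  qed
  also have "\<dots> = (\<Sum>j<k. card {e\<in>{1..M}. p ^ e dvd y j})"
    by (rule card_swap[symmetric]) auto
  also have "\<dots> = (\<Sum>j<k. multiplicity p (y j))"
    using nzy My nu by (intro sum.cong refl mult_as_card[symmetric]) auto
  also have "\<dots> = multiplicity p (\<Prod>j<k. y j)"
    using nzy by (intro prime_elem_multiplicity_prod_distrib[symmetric] pe) auto
  finally show "multiplicity p (\<Prod>j<k. x j) \<le> multiplicity p (\<Prod>j<k. y j)" .
qed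

context aenum
begin

definition afact where "afact k = (\<Prod>j<k. a k - a j)"
definition pf where "pf k b = (\<Prod>j<k. b - a j)"

lemma deg0:
  assumes "0 < degree m" "w < card (UNIV::'a set) ^ degree m" "w' < card (UNIV::'a set) ^ degree m"
    "m dvd a w - a w'"
  shows "w = w'"
proof (rule ccontr)
  assume "w \<noteq> w'"
  then have ne: "a w - a w' \<noteq> 0" using a_inj by auto
  have "degree (a w - a w') \<le> max (degree (a w)) (degree (a w'))" by (rule degree_diff_le_max)
  also have "\<dots> < degree m" using a_deg' assms by simp
  finally have "degree (a w - a w') < degree m" .
  moreover have "degree m \<le> degree (a w - a w')" using assms(4) ne by (rule dvd_imp_degree_le)
  ultimately show False by simp
qed

lemma count_le:
  assumes dm: "0 < degree m"
  shows "card {j\<in>{..<k}. m dvd a k - a j} \<le> card {j\<in>{..<k}. m dvd b - a j}"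
proof -
  define d where "d = degree m"
  define Q where "Q = card (UNIV::'a set) ^ d"
  have Q0: "0 < Q" unfolding Q_def using q_pos by simp
  define u where "u = k div Q"
  define v where "v = k mod Q"
  have kuv: "k = u * Q + v" unfolding u_def v_def by simp
  have vQ: "v < Q" unfolding v_def using Q0 by simp
  have m0: "m \<noteq> 0" using dm by auto
  have jsplit: "a j = monom 1 d * a (j div Q) + a (j mod Q)" for j
  proof -
    have "a j = a ((j div Q) * Q + j mod Q)" by simp
    also have "\<dots> = monom 1 d * a (j div Q) + a (j mod Q)"
      unfolding Q_def by (rule a_split) (simp add: Q_def[symmetric] Q0)
    finally show ?thesis .
  qed
  have up: "card {j\<in>{..<k}. m dvd a k - a j} \<le> u"
  proof -
    let ?S = "{j\<in>{..<k}. m dvd a k - a j}"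
    have inj: "inj_on (\<lambda>j. j div Q) ?S"
    proof (rule inj_onI)
      fix j j' assume j: "j \<in> ?S" and j': "j' \<in> ?S" and eq: "j div Q = j' div Q"
      have "m dvd a k - a j'" "m dvd a k - a j" using j j' by auto
      then have "m dvd (a k - a j') - (a k - a j)" by (rule dvd_diff)
      moreover have "(a k - a j') - (a k - a j) = a (j mod Q) - a (j' mod Q)"
      proof -
        have "(a k - a j') - (a k - a j) = a j - a j'" by simp
        also have "\<dots> = (monom 1 d * a (j div Q) + a (j mod Q)) - (monom 1 d * a (j' div Q) + a (j' mod Q))"
          by (subst jsplit[of j], subst jsplit[of j'], rule refl)
        also have "\<dots> = a (j mod Q) - a (j' mod Q)" unfolding eq by simp
        finally show ?thesis .
      qed
      ultimately have "m dvd a (j mod Q) - a (j' mod Q)" by simp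
      moreover have "j mod Q < card (UNIV::'a set) ^ degree m" "j' mod Q < card (UNIV::'a set) ^ degree m"
        using Q0 unfolding Q_def d_def by auto
      ultimately have "j mod Q = j' mod Q" using deg0[OF dm] by blast
      then show "j = j'" using eq by (metis div_mult_mod_eq)
    qed
    have img: "(\<lambda>j. j div Q) ` ?S \<subseteq> {..<u}"
    proof
      fix i assume "i \<in> (\<lambda>j. j div Q) ` ?S"
      then obtain j where j: "j < k" "m dvd a k - a j" and i: "i = j div Q" by auto
      have "i \<le> u" unfolding i u_def using j by (simp add: div_le_mono)
      moreover have "i \<noteq> u"
      proof
        assume iu: "i = u"
        have "a k = monom 1 d * a u + a v" using jsplit[of k] unfolding u_def v_def by simp
        moreover have "a j = monom 1 d * a u + a (j mod Q)" using jsplit[of j] iu i by simp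
        ultimately have "m dvd a v - a (j mod Q)" using j by simp
        moreover have "v < card (UNIV::'a set) ^ degree m" "j mod Q < card (UNIV::'a set) ^ degree m"
          using Q0 vQ unfolding Q_def d_def by auto
        ultimately have "v = j mod Q" using deg0[OF dm] by blast
        then have "j = k" using kuv iu i by (metis div_mult_mod_eq)
        then show False using j by simp
      qed
      ultimately show "i \<in> {..<u}" by simp
    qed
    have "card ?S = card ((\<lambda>j. j div Q) ` ?S)" using inj by (simp add: card_image)
    also have "\<dots> \<le> card {..<u}" using img by (intro card_mono) auto
    finally show ?thesis by simp
  qed
  have ex: "\<exists>w<Q. a w = (b - monom 1 d * a i) mod m" for i
  proof -
    let ?r = "(b - monom 1 d * a i) mod m"
    have "?r = 0 \<or> degree ?r < d" unfolding d_def using m0 degree_mod_less by blast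
    then show ?thesis unfolding Q_def by (rule a_surj)
  qed
  define ws where "ws i = (SOME w. w < Q \<and> a w = (b - monom 1 d * a i) mod m)" for i
  have ws: "ws i < Q" "a (ws i) = (b - monom 1 d * a i) mod m" for i
    using someI_ex[OF ex[of i]] unfolding ws_def by auto
  have lo: "u \<le> card {j\<in>{..<k}. m dvd b - a j}"
  proof -
    let ?f = "\<lambda>i. i * Q + ws i"
    have inj: "inj_on ?f {..<u}"
    proof (rule inj_onI)
      fix i i' assume "?f i = ?f i'"
      then have "(?f i) div Q = (?f i') div Q" by simp
      then show "i = i'" using ws(1)[of i] ws(1)[of i'] Q0 by simp
    qed
    have img: "?f ` {..<u} \<subseteq> {j\<in>{..<k}. m dvd b - a j}"
    proof
      fix j assume "j \<in> ?f ` {..<u}"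
      then obtain i where i: "i < u" and j: "j = i * Q + ws i" by auto
      have "j < (i + 1) * Q" using j ws(1)[of i] by simp
      also have "\<dots> \<le> u * Q" using i by (intro mult_le_mono1) simp
      also have "\<dots> \<le> k" using kuv by simp
      finally have jk: "j < k" .
      have wsi: "ws i < card (UNIV::'a set) ^ d" using ws(1)[of i] unfolding Q_def .
      have aj: "a j = monom 1 d * a i + a (ws i)"
        unfolding j Q_def by (rule a_split[OF wsi])
      have "b - a j = (b - monom 1 d * a i) - (b - monom 1 d * a i) mod m"
        unfolding aj ws(2)[of i, symmetric] by (rule diff_diff_eq[symmetric])
      also have "\<dots> = m * ((b - monom 1 d * a i) div m)" by (rule minus_mod_eq_mult_div)
      finally have "m dvd b - a j" by simp
      with jk show "j \<in> {j\<in>{..<k}. m dvd b - a j}" by simp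
    qed
    have "u = card (?f ` {..<u})" using inj by (simp add: card_image)
    also have "\<dots> \<le> card {j\<in>{..<k}. m dvd b - a j}" using img by (intro card_mono) auto
    finally show ?thesis .
  qed
  from up lo show ?thesis by simp
qed

lemma a_ne: "j < k \<Longrightarrow> a k - a j \<noteq> 0"
proof
  assume "j < k" "a k - a j = 0"
  then have "a k = a j" by simp
  then have "k = j" by (rule a_inj)
  then show False using \<open>j < k\<close> by simp
qed

lemma afact_dvd: "afact k dvd pf k b"
proof (cases "\<exists>j<k. b = a j")
  case True
  then have "pf k b = 0" unfolding pf_def by auto
  then show ?thesis by simp
next
  case False
  show ?thesis unfolding afact_def pf_def
  proof (rule dvd_by_counts)
    show "\<forall>j<k. a k - a j \<noteq> 0" using a_ne by blast
    show "\<forall>j<k. b - a j \<noteq> 0" using False by auto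
  qed (rule count_le)
qed

lemma afact_nz: "afact k \<noteq> 0"
  unfolding afact_def using a_ne by simp

lemma lam_witness:
  assumes "0 < degree g"
  shows "g dvd afact (card (UNIV::'a set) ^ degree g)"
proof -
  define K where "K = card (UNIV::'a set) ^ degree g"
  have g0: "g \<noteq> 0" using assms by auto
  have r: "a K mod g = 0 \<or> degree (a K mod g) < degree g" using degree_mod_less[OF g0] .
  obtain j where j: "j < card (UNIV::'a set) ^ degree g" "a j = a K mod g"
    using a_surj[OF r] by blast
  have jK: "j < K" using j(1) unfolding K_def .
  have "a K - a j = a K - a K mod g" using j(2) by simp
  also have "\<dots> = g * (a K div g)" by (rule minus_mod_eq_mult_div)
  finally have "g dvd a K - a j" by simp
  also have "a K - a j dvd afact K" unfolding afact_def using jK by (intro dvd_prodI) auto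
  finally show ?thesis unfolding K_def .
qed

lemma lam_props:
  assumes "0 < degree g"
  shows "0 < lambda_fn enum g" "g dvd afact (lambda_fn enum g)"
    "lambda_fn enum g \<le> card (UNIV::'a set) ^ degree g"
proof -
  have ex: "0 < card (UNIV::'a set) ^ degree g \<and> g dvd afact (card (UNIV::'a set) ^ degree g)"
    using lam_witness[OF assms] q_pos by simp
  have "0 < lambda_fn enum g \<and> g dvd afact (lambda_fn enum g)"
    unfolding lambda_fn_def afact_def
    by (rule LeastI[where P="\<lambda>k. 0 < k \<and> g dvd (\<Prod>j<k. a k - a j)" and k="card (UNIV::'a set) ^ degree g"]) (use ex in \<open>simp add: afact_def\<close>)
  then show "0 < lambda_fn enum g" "g dvd afact (lambda_fn enum g)" by auto
  show "lambda_fn enum g \<le> card (UNIV::'a set) ^ degree g"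
    unfolding lambda_fn_def
    by (rule Least_le[where P="\<lambda>k. 0 < k \<and> g dvd (\<Prod>j<k. a k - a j)" and k="card (UNIV::'a set) ^ degree g"]) (use ex in \<open>simp add: afact_def\<close>)
qed

lemma lam_ge:
  assumes "0 < degree g" "lambda_fn enum g \<le> k"
  shows "g dvd pf k b"
proof -
  let ?l = "lambda_fn enum g"
  have "g dvd afact ?l" using lam_props[OF assms(1)] by simp
  also have "afact ?l dvd pf ?l b" by (rule afact_dvd)
  also have "pf ?l b dvd pf k b" unfolding pf_def
    using assms(2) by (intro prod_dvd_prod_subset) auto
  finally show ?thesis .
qed

lemma pf_zero: "j < k \<Longrightarrow> pf k (a j) = 0"
  unfolding pf_def by auto

lemma pf_self: "pf k (a k) = afact k"
  unfolding pf_def afact_def ..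

end


lemma lists_Suc_eq:
  "{ms. length ms = Suc n \<and> (\<forall>i<Suc n. ms!i \<in> S i)} =
   (\<lambda>(xs, x). x#xs) ` ({ms. length ms = n \<and> (\<forall>i<n. ms!i \<in> S (Suc i))} \<times> S 0)"
proof (intro equalityI subsetI)
  fix ms assume "ms \<in> {ms. length ms = Suc n \<and> (\<forall>i<Suc n. ms!i \<in> S i)}"
  then obtain x xs where ms: "ms = x # xs" and l: "length xs = n" and h: "\<forall>i<Suc n. ms!i \<in> S i"
    by (cases ms) auto
  have "x \<in> S 0" using h ms by auto
  moreover have "\<forall>i<n. xs!i \<in> S (Suc i)" using h ms by auto
  ultimately show "ms \<in> (\<lambda>(xs, x). x#xs) ` ({ms. length ms = n \<and> (\<forall>i<n. ms!i \<in> S (Suc i))} \<times> S 0)"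
    using ms l by (auto intro!: image_eqI[of _ _ "(xs, x)"])
next
  fix ms assume "ms \<in> (\<lambda>(xs, x). x#xs) ` ({ms. length ms = n \<and> (\<forall>i<n. ms!i \<in> S (Suc i))} \<times> S 0)"
  then obtain x xs where ms: "ms = x # xs" and l: "length xs = n" and h: "\<forall>i<n. xs!i \<in> S (Suc i)"
    and x: "x \<in> S 0" by auto
  have "\<forall>i<Suc n. ms!i \<in> S i"
  proof (intro allI impI)
    fix i assume "i < Suc n"
    then show "ms ! i \<in> S i" using ms h x by (cases i) auto
  qed
  then show "ms \<in> {ms. length ms = Suc n \<and> (\<forall>i<Suc n. ms!i \<in> S i)}" using ms l by simp
qed

lemma prod_sum_lists:
  fixes f :: "nat \<Rightarrow> 'b \<Rightarrow> 'c::comm_semiring_1"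
  assumes "\<And>i. finite (S i)"
  shows "(\<Sum>ms\<in>{ms. length ms = n \<and> (\<forall>i<n. ms!i \<in> S i)}. \<Prod>x<n. f x (ms!x)) = (\<Prod>i<n. \<Sum>m\<in>S i. f i m)"
  using assms
proof (induction n arbitrary: S f)
  case 0
  have "{ms. length ms = 0 \<and> (\<forall>i<0. ms!i \<in> S i)} = {[]}" by auto
  then show ?case by simp
next
  case (Suc n)
  have inj: "inj_on (\<lambda>(xs, x). x#xs) X" for X :: "('b list \<times> 'b) set"
    by (auto simp: inj_on_def)
  have "(\<Sum>ms\<in>{ms. length ms = Suc n \<and> (\<forall>i<Suc n. ms!i \<in> S i)}. \<Prod>x<Suc n. f x (ms!x))
     = (\<Sum>p\<in>{ms. length ms = n \<and> (\<forall>i<n. ms!i \<in> S (Suc i))} \<times> S 0. \<Prod>x<Suc n. f x ((snd p # fst p)!x))"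
    unfolding lists_Suc_eq by (subst sum.reindex[OF inj]) (simp add: case_prod_beta)
  also have "\<dots> = (\<Sum>xs\<in>{ms. length ms = n \<and> (\<forall>i<n. ms!i \<in> S (Suc i))}. \<Sum>x\<in>S 0.
        f 0 x * (\<Prod>i<n. f (Suc i) (xs!i)))"
    by (simp add: sum.cartesian_product split_beta prod.lessThan_Suc_shift del: prod.lessThan_Suc)
  also have "\<dots> = (\<Sum>x\<in>S 0. f 0 x) * (\<Sum>xs\<in>{ms. length ms = n \<and> (\<forall>i<n. ms!i \<in> S (Suc i))}.
        (\<Prod>i<n. f (Suc i) (xs!i)))"
    by (simp add: sum_distrib_right sum_distrib_left mult.commute)
  also have "\<dots> = (\<Sum>x\<in>S 0. f 0 x) * (\<Prod>i<n. \<Sum>m\<in>S (Suc i). f (Suc i) m)"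
    using Suc.IH[of "\<lambda>i. S (Suc i)" "\<lambda>i. f (Suc i)"] Suc.prems by simp
  also have "\<dots> = (\<Prod>i<Suc n. \<Sum>m\<in>S i. f i m)"
    by (simp add: prod.lessThan_Suc_shift del: prod.lessThan_Suc)
  finally show ?case .
qed

lemma poly_sum_upto:
  fixes x :: "'b::comm_semiring_1"
  assumes "degree p \<le> N"
  shows "poly p x = (\<Sum>i\<le>N. coeff p i * x ^ i)"
proof -
  have "poly p x = (\<Sum>i\<le>degree p. coeff p i * x ^ i)" by (rule poly_altdef)
  also have "\<dots> = (\<Sum>i\<le>N. coeff p i * x ^ i)"
    using assms by (intro sum.mono_neutral_left) (auto simp: coeff_eq_0)
  finally show ?thesis .
qed

context aenum
begin

definition PP :: "nat \<Rightarrow> 'a poly poly" where "PP k = (\<Prod>j<k. [:- a j, 1:])"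

lemma poly_PP: "poly (PP k) b = pf k b"
  unfolding PP_def pf_def by (simp add: poly_prod)

lemma PP_Suc: "PP (Suc k) = PP k * [:- a k, 1:]"
  unfolding PP_def by simp

lemma PP_monic: "degree (PP k) = k \<and> coeff (PP k) k = 1"
proof (induction k)
  case 0 then show ?case by (simp add: PP_def)
next
  case (Suc k)
  have nz: "PP k \<noteq> 0" using Suc by auto
  have d1: "degree [:- a k, 1:] = 1" by simp
  have dm: "degree (PP k * [:- a k, 1:]) = degree (PP k) + degree [:- a k, 1:]"
    by (rule degree_mult_eq) (use nz in auto)
  have dS: "degree (PP (Suc k)) = Suc k" unfolding PP_Suc dm d1 using Suc by simp
  moreover have "coeff (PP (Suc k)) (Suc k) = 1"
  proof -
    have "coeff (PP (Suc k)) (Suc k) = lead_coeff (PP k * [:- a k, 1:])"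
      using dS unfolding PP_Suc by simp
    also have "\<dots> = lead_coeff (PP k) * lead_coeff [:- a k, 1:]" by (rule lead_coeff_mult)
    also have "\<dots> = 1" using Suc d1 by simp
    finally show ?thesis .
  qed
  ultimately show ?case by simp
qed

lemma basis:
  fixes p :: "'a poly poly"
  assumes "degree p \<le> n"
  shows "\<exists>\<beta>. \<forall>b. poly p b = (\<Sum>k\<le>n. \<beta> k * pf k b)"
  using assms
proof (induction n arbitrary: p)
  case 0
  define c where "c = coeff p 0"
  have pc: "p = [:c:]" using degree_0_id[of p] 0 unfolding c_def by simp
  show ?case by (intro exI[of _ "\<lambda>_. c"]) (simp add: pc pf_def)
next
  case (Suc n)
  define c where "c = coeff p (Suc n)"
  define p' where "p' = p - smult c (PP (Suc n))"
  have "degree p' \<le> n"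
  proof (rule degree_le, intro allI impI)
    fix i assume i: "n < i"
    show "coeff p' i = 0"
    proof (cases "i = Suc n")
      case True then show ?thesis using PP_monic[of "Suc n"] by (simp add: p'_def c_def)
    next
      case False
      then have "Suc n < i" using i by simp
      then have "coeff p i = 0" "coeff (PP (Suc n)) i = 0"
        using Suc.prems PP_monic[of "Suc n"] by (auto intro!: coeff_eq_0)
      then show ?thesis by (simp add: p'_def)
    qed
  qed
  then obtain \<beta> where \<beta>: "\<forall>b. poly p' b = (\<Sum>k\<le>n. \<beta> k * pf k b)" using Suc.IH by blast
  define \<beta>' where "\<beta>' = \<beta>(Suc n := c)"
  have "poly p b = (\<Sum>k\<le>Suc n. \<beta>' k * pf k b)" for b
  proof -
    have s: "(\<Sum>k\<le>n. \<beta> k * pf k b) = (\<Sum>k\<le>n. \<beta>' k * pf k b)"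
      by (rule sum.cong) (auto simp: \<beta>'_def)
    have c: "\<beta>' (Suc n) = c" by (simp add: \<beta>'_def)
    have e: "(\<Sum>k\<le>Suc n. \<beta>' k * pf k b) = (\<Sum>k\<le>n. \<beta>' k * pf k b) + \<beta>' (Suc n) * pf (Suc n) b"
      by (rule sum.atMost_Suc)
    have "poly p b = poly p' b + c * pf (Suc n) b" by (simp add: p'_def poly_PP)
    then show ?thesis using \<beta> s c e by simp
  qed
  then show ?case by blast
qed

end


locale msetup = aenum enum for enum :: "nat \<Rightarrow> 'a::{field_gcd,finite}" +
  fixes fs :: "'a poly list" and g :: "'a poly"
  assumes fdeg: "\<forall>f\<in>set fs. 0 < degree f" and gdeg: "0 < degree g"
begin

definition mu where "mu i = mu_fn enum (fs!i) g"
definition Box where "Box = {ks. length ks = length fs \<and> (\<forall>i<length fs. ks!i < mu i)}"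
definition FK where "FK ks = (\<Prod>i<length fs. afact (ks!i))"
definition mm where "mm ks = g div gcd g (FK ks)"
definition PF where "PF ks bs = (\<Prod>i<length fs. pf (ks!i) (bs!i))"
definition R where "R ks = {c. c mod mm ks = c}"
definition Phi where "Phi C = (\<lambda>bs\<in>dom_res fs. (\<Sum>ks\<in>Box. C ks * PF ks bs) mod g)"

lemma g0: "g \<noteq> 0" using gdeg by auto

lemma fi: "i < length fs \<Longrightarrow> 0 < degree (fs!i)" using fdeg by auto

lemma mu_le: "mu i \<le> card (UNIV::'a set) ^ degree (fs!i)" "mu i \<le> lambda_fn enum g"
  unfolding mu_def mu_fn_def by auto

lemma Box_fin: "finite Box"
proof (rule finite_subset)
  show "Box \<subseteq> {ks. set ks \<subseteq> {..<lambda_fn enum g} \<and> length ks = length fs}"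
  proof
    fix ks assume ks: "ks \<in> Box"
    have "x < lambda_fn enum g" if "x \<in> set ks" for x
    proof -
      obtain i where "i < length ks" "x = ks!i" using \<open>x \<in> set ks\<close> by (auto simp: in_set_conv_nth)
      then show ?thesis using ks mu_le(2)[of i] unfolding Box_def by fastforce
    qed
    then show "ks \<in> {ks. set ks \<subseteq> {..<lambda_fn enum g} \<and> length ks = length fs}"
      using ks unfolding Box_def by auto
  qed
qed (rule finite_lists_length_eq, simp)

lemma FK_dvd: "FK ks dvd PF ks bs"
  unfolding FK_def PF_def by (rule prod_dvd_prod) (rule afact_dvd)

lemma g_eq: "mm ks * gcd g (FK ks) = g"
  unfolding mm_def by (simp add: dvd_div_mult_self)

lemma mm_nz: "mm ks \<noteq> 0" using g_eq[of ks] g0 by auto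

lemma g_dvd_mm: "g dvd mm ks * PF ks bs"
proof -
  have "gcd g (FK ks) dvd PF ks bs" using FK_dvd by (rule dvd_trans[OF gcd_dvd2])
  then have "mm ks * gcd g (FK ks) dvd mm ks * PF ks bs" by (rule mult_dvd_mono[OF dvd_refl])
  then show ?thesis using g_eq[of ks] by simp
qed

lemma vanish:
  assumes bs: "bs \<in> dom_res fs" and l: "length ks = length fs" and nb: "ks \<notin> Box"
  shows "g dvd PF ks bs"
proof -
  obtain i where i: "i < length fs" "\<not> ks!i < mu i" using l nb unfolding Box_def by auto
  have deg: "degree (bs!i) < degree (fs!i)" using bs i unfolding dom_res_def by auto
  show ?thesis
  proof (cases "card (UNIV::'a set) ^ degree (fs!i) \<le> ks!i")
    case True
    obtain j where j: "j < card (UNIV::'a set) ^ degree (fs!i)" "a j = bs!i" using a_surj[OF disjI2[OF deg]] by blast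
    have "pf (ks!i) (bs!i) = 0" using pf_zero[of j "ks!i"] j True by simp
    then have "PF ks bs = 0" unfolding PF_def using i by (auto intro!: prod_zero)
    then show ?thesis by simp
  next
    case False
    then have "lambda_fn enum g \<le> ks!i" using i unfolding mu_def mu_fn_def by auto
    then have "g dvd pf (ks!i) (bs!i)" by (rule lam_ge[OF gdeg])
    also have "pf (ks!i) (bs!i) dvd PF ks bs" unfolding PF_def using i by (intro dvd_prodI) auto
    finally show ?thesis .
  qed
qed

lemma R_eq: "R ks = a ` {..<card (UNIV::'a set) ^ degree (mm ks)}"
proof (intro equalityI subsetI)
  fix c assume "c \<in> R ks"
  then have c: "c mod mm ks = c" unfolding R_def by simp
  have "c = 0 \<or> degree c < degree (mm ks)"
    using degree_mod_less[OF mm_nz[of ks], of c] c by simp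
  from a_surj[OF this] obtain w where "w < card (UNIV::'a set) ^ degree (mm ks)" "a w = c" by blast
  then show "c \<in> a ` {..<card (UNIV::'a set) ^ degree (mm ks)}" by auto
next
  fix c assume "c \<in> a ` {..<card (UNIV::'a set) ^ degree (mm ks)}"
  then obtain w where w: "w < card (UNIV::'a set) ^ degree (mm ks)" "c = a w" by auto
  have "c = 0 \<or> degree c < degree (mm ks)" using a_deg[OF w(1)] w(2) by simp
  then have "c mod mm ks = c" by (auto intro: mod_poly_less)
  then show "c \<in> R ks" unfolding R_def by simp
qed

lemma R_card: "card (R ks) = card (UNIV::'a set) ^ degree (mm ks)"
proof -
  have "inj_on a {..<card (UNIV::'a set) ^ degree (mm ks)}" by (auto intro: inj_onI a_inj)
  then show ?thesis unfolding R_eq by (simp add: card_image)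
qed

lemma sum_list_less:
  assumes "length xs = length ys" "\<forall>i<length ys. xs!i \<le> ys!i" "xs \<noteq> ys"
  shows "sum_list xs < sum_list (ys::nat list)"
proof -
  have "\<exists>i<length ys. xs!i \<noteq> ys!i"
  proof (rule ccontr)
    assume "\<not> (\<exists>i<length ys. xs!i \<noteq> ys!i)"
    then have "xs = ys" using assms(1) by (intro nth_equalityI) auto
    with assms(3) show False ..
  qed
  then obtain i where i: "i < length ys" "xs!i \<noteq> ys!i" by blast
  have "(\<Sum>i\<in>{0..<length ys}. xs!i) < (\<Sum>i\<in>{0..<length ys}. ys!i)"
    using assms i by (intro sum_strict_mono_ex1) (auto intro!: bexI[of _ i] simp: le_neq_implies_less)
  then show ?thesis using assms(1) by (simp add: sum_list_sum_nth)
qed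

lemma map_a_dom: "ks \<in> Box \<Longrightarrow> map a ks \<in> dom_res fs"
  unfolding Box_def dom_res_def
proof (clarsimp)
  fix i assume l: "length ks = length fs" and h: "\<forall>i<length fs. ks!i < mu i" and i: "i < length fs"
  have "ks!i < card (UNIV::'a set) ^ degree (fs!i)" using h i mu_le(1)[of i] by (meson less_le_trans)
  then show "degree (a (ks!i)) < degree (fs!i)" using a_deg' fi[OF i] by simp
qed

lemma PF_map_self: "length ks = length fs \<Longrightarrow> PF ks (map a ks) = FK ks"
  unfolding PF_def FK_def by (intro prod.cong refl) (simp add: pf_self)

lemma PF_map_zero: "length ks = length fs \<Longrightarrow> length ks' = length fs \<Longrightarrow> i < length fs \<Longrightarrow>
   ks!i < ks'!i \<Longrightarrow> PF ks' (map a ks) = 0"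
  unfolding PF_def by (intro prod_zero) (auto intro!: bexI[of _ i] pf_zero)

lemma triangular:
  assumes hD: "\<forall>bs\<in>dom_res fs. g dvd (\<Sum>ks\<in>Box. D ks * PF ks bs)"
  shows "ks \<in> Box \<Longrightarrow> g dvd D ks * FK ks"
proof (induction "sum_list ks" arbitrary: ks rule: less_induct)
  case less
  have l: "length ks = length fs" using less.prems unfolding Box_def by simp
  have "g dvd (\<Sum>ks'\<in>Box. D ks' * PF ks' (map a ks))" using hD map_a_dom[OF less.prems] by blast
  also have "(\<Sum>ks'\<in>Box. D ks' * PF ks' (map a ks)) =
      D ks * PF ks (map a ks) + (\<Sum>ks'\<in>Box - {ks}. D ks' * PF ks' (map a ks))"
    using Box_fin less.prems by (simp add: sum.remove)
  finally have h1: "g dvd D ks * PF ks (map a ks) + (\<Sum>ks'\<in>Box - {ks}. D ks' * PF ks' (map a ks))" .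
  have h2: "g dvd (\<Sum>ks'\<in>Box - {ks}. D ks' * PF ks' (map a ks))"
  proof (rule dvd_sum)
    fix ks' assume ks': "ks' \<in> Box - {ks}"
    have l': "length ks' = length fs" using ks' unfolding Box_def by simp
    show "g dvd D ks' * PF ks' (map a ks)"
    proof (cases "\<exists>i<length fs. ks!i < ks'!i")
      case True
      then obtain i where "i < length fs" "ks!i < ks'!i" by blast
      then have "PF ks' (map a ks) = 0" using PF_map_zero l l' by blast
      then show ?thesis by simp
    next
      case False
      have le: "\<forall>i<length ks. ks'!i \<le> ks!i"
      proof (intro allI impI)
        fix i assume "i < length ks"
        then have "\<not> ks!i < ks'!i" using False l by auto
        then show "ks'!i \<le> ks!i" by simp
      qed
      have "sum_list ks' < sum_list ks"
        by (rule sum_list_less) (use l l' ks' le in auto)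
      then have "g dvd D ks' * FK ks'" using less.hyps ks' by blast
      also have "D ks' * FK ks' dvd D ks' * PF ks' (map a ks)" by (intro mult_dvd_mono dvd_refl FK_dvd)
      finally show ?thesis .
    qed
  qed
  have "g dvd D ks * PF ks (map a ks)" using h1 h2 by (simp add: dvd_add_left_iff)
  then show ?case using PF_map_self[OF l] by simp
qed

lemma mm_dvd:
  assumes "g dvd d * FK ks"
  shows "mm ks dvd d"
proof -
  let ?G = "gcd g (FK ks)"
  have G0: "?G \<noteq> 0" using g0 by simp
  have e: "(FK ks div ?G) * ?G = FK ks" by (simp add: dvd_div_mult_self)
  have e2: "(d * (FK ks div ?G)) * ?G = d * FK ks" by (simp only: mult.assoc e)
  have "mm ks * ?G dvd (d * (FK ks div ?G)) * ?G"
    unfolding g_eq e2 by (rule assms)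
  then have "mm ks dvd d * (FK ks div ?G)" by (simp only: dvd_times_right_cancel_iff[OF G0])
  moreover have "coprime (mm ks) (FK ks div ?G)" unfolding mm_def using g0 by (intro div_gcd_coprime) simp
  ultimately show ?thesis by (simp add: coprime_dvd_mult_left_iff)
qed

lemma Phi_inj: "inj_on Phi (PiE Box R)"
proof (rule inj_onI)
  fix C C' assume C: "C \<in> PiE Box R" and C': "C' \<in> PiE Box R" and eq: "Phi C = Phi C'"
  have hD: "\<forall>bs\<in>dom_res fs. g dvd (\<Sum>ks\<in>Box. (C ks - C' ks) * PF ks bs)"
  proof
    fix bs assume bs: "bs \<in> dom_res fs"
    have "(\<Sum>ks\<in>Box. C ks * PF ks bs) mod g = (\<Sum>ks\<in>Box. C' ks * PF ks bs) mod g"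
      using fun_cong[OF eq, of bs] bs unfolding Phi_def by simp
    then have "g dvd (\<Sum>ks\<in>Box. C ks * PF ks bs) - (\<Sum>ks\<in>Box. C' ks * PF ks bs)"
      by (simp add: mod_eq_dvd_iff)
    also have "(\<Sum>ks\<in>Box. C ks * PF ks bs) - (\<Sum>ks\<in>Box. C' ks * PF ks bs) =
        (\<Sum>ks\<in>Box. (C ks - C' ks) * PF ks bs)"
      by (simp add: left_diff_distrib sum_subtractf)
    finally show "g dvd (\<Sum>ks\<in>Box. (C ks - C' ks) * PF ks bs)" .
  qed
  show "C = C'"
  proof (rule PiE_ext[OF C C'])
    fix ks assume ks: "ks \<in> Box"
    have "mm ks dvd C ks - C' ks" using triangular[OF hD ks] by (rule mm_dvd)
    then have "C ks mod mm ks = C' ks mod mm ks" by (simp add: mod_eq_dvd_iff)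
    moreover have "C ks mod mm ks = C ks" "C' ks mod mm ks = C' ks"
      using C C' ks unfolding R_def by (auto simp: PiE_iff)
    ultimately show "C ks = C' ks" by simp
  qed
qed

end


context msetup
begin

lemma Phi_PiE: "Phi C \<in> dom_res fs \<rightarrow>\<^sub>E res_sys g"
  unfolding Phi_def res_sys_def
proof (rule restrict_PiE_iff[THEN iffD2], intro ballI)
  fix bs
  let ?x = "(\<Sum>ks\<in>Box. C ks * PF ks bs) mod g"
  have "?x = 0 \<or> degree ?x < degree g" using degree_mod_less[OF g0] by blast
  then show "?x \<in> {b. degree b < degree g}" using gdeg by auto
qed

lemma lists_fin: "finite {e. length e = n \<and> (\<forall>i<n. e!i \<in> {..(N::nat)})}"
proof (rule finite_subset)
  show "{e. length e = n \<and> (\<forall>i<n. e!i \<in> {..N})} \<subseteq> {xs. set xs \<subseteq> {..N} \<and> length xs = n}"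
    by (auto simp: in_set_conv_nth)
qed (rule finite_lists_length_eq, simp)

lemma PF_expand:
  assumes "\<forall>i<length fs. ks!i \<le> N"
  shows "PF ks bs = (\<Sum>e\<in>{e. length e = length fs \<and> (\<forall>i<length fs. e!i \<in> {..N})}.
            (\<Prod>i<length fs. coeff (PP (ks!i)) (e!i)) * (\<Prod>i<length fs. (bs!i) ^ (e!i)))"
proof -
  have "PF ks bs = (\<Prod>i<length fs. \<Sum>x\<in>{..N}. coeff (PP (ks!i)) x * (bs!i) ^ x)"
    unfolding PF_def
  proof (intro prod.cong refl)
    fix i assume "i \<in> {..<length fs}"
    then have "degree (PP (ks!i)) \<le> N" using assms PP_monic by simp
    then show "pf (ks!i) (bs!i) = (\<Sum>x\<in>{..N}. coeff (PP (ks!i)) x * (bs!i) ^ x)"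
      using poly_sum_upto poly_PP by metis
  qed
  also have "\<dots> = (\<Sum>e\<in>{e. length e = length fs \<and> (\<forall>i<length fs. e!i \<in> {..N})}.
            \<Prod>i<length fs. coeff (PP (ks!i)) (e!i) * (bs!i) ^ (e!i))"
    by (rule prod_sum_lists[symmetric]) simp
  also have "\<dots> = (\<Sum>e\<in>{e. length e = length fs \<and> (\<forall>i<length fs. e!i \<in> {..N})}.
            (\<Prod>i<length fs. coeff (PP (ks!i)) (e!i)) * (\<Prod>i<length fs. (bs!i) ^ (e!i)))"
    by (simp add: prod.distrib)
  finally show ?thesis .
qed

lemma Phi_poly: "is_poly_function fs g (Phi C)"
proof -
  define N where "N = lambda_fn enum g"
  define E where "E = {e. length e = length fs \<and> (\<forall>i<length fs. e!i \<in> {..N})}"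
  define c where "c e = (\<Sum>ks\<in>Box. C ks * (\<Prod>i<length fs. coeff (PP (ks!i)) (e!i)))" for e
  have finE: "finite E" unfolding E_def by (rule lists_fin)
  have key: "mpoly_eval E c bs = (\<Sum>ks\<in>Box. C ks * PF ks bs)" if l: "length bs = length fs" for bs
  proof -
    have "(\<Sum>ks\<in>Box. C ks * PF ks bs) = (\<Sum>ks\<in>Box. C ks * (\<Sum>e\<in>E.
            (\<Prod>i<length fs. coeff (PP (ks!i)) (e!i)) * (\<Prod>i<length fs. (bs!i) ^ (e!i))))"
    proof (intro sum.cong refl)
      fix ks assume "ks \<in> Box"
      then have "\<forall>i<length fs. ks!i \<le> N"
      proof (intro allI impI)
        fix i assume "ks \<in> Box" "i < length fs"
        then have "ks!i < mu i" unfolding Box_def by simp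
        then show "ks!i \<le> N" using mu_le(2)[of i] unfolding N_def by simp
      qed
      then show "C ks * PF ks bs = C ks * (\<Sum>e\<in>E.
            (\<Prod>i<length fs. coeff (PP (ks!i)) (e!i)) * (\<Prod>i<length fs. (bs!i) ^ (e!i)))"
        unfolding E_def by (simp add: PF_expand)
    qed
    also have "\<dots> = (\<Sum>e\<in>E. c e * (\<Prod>i<length fs. (bs!i) ^ (e!i)))"
      unfolding c_def by (simp add: sum_distrib_left sum_distrib_right mult.assoc sum.swap[of _ Box E])
    also have "\<dots> = mpoly_eval E c bs" unfolding mpoly_eval_def using l by simp
    finally show ?thesis by simp
  qed
  show ?thesis unfolding is_poly_function_def
  proof (intro exI conjI ballI)
    show "finite E" by (rule finE)
    show "\<And>e. e \<in> E \<Longrightarrow> length e = length fs" unfolding E_def by simp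
    fix bs assume bs: "bs \<in> dom_res fs"
    then have "length bs = length fs" unfolding dom_res_def by simp
    then show "mpoly_eval E c bs mod g = Phi C bs mod g"
      using bs key unfolding Phi_def by simp
  qed
qed

lemma Phi_onto:
  assumes h: "h \<in> dom_res fs \<rightarrow>\<^sub>E res_sys g" and hp: "is_poly_function fs g h"
  shows "h \<in> Phi ` PiE Box R"
proof -
  obtain E c where finE: "finite E" and lE: "\<forall>e\<in>E. length e = length fs"
    and hE: "\<forall>bs\<in>dom_res fs. mpoly_eval E c bs mod g = h bs mod g"
    using hp unfolding is_poly_function_def by blast
  define N where "N = lambda_fn enum g + (\<Sum>e\<in>E. sum_list e)"
  have eN: "e!i \<le> N" if "e \<in> E" "i < length fs" for e i
  proof -
    have "e!i \<le> sum_list e" using that lE by (intro elem_le_sum_list) auto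
    also have "\<dots> \<le> (\<Sum>e\<in>E. sum_list e)" using finE that by (intro member_le_sum) auto
    finally show ?thesis unfolding N_def by simp
  qed
  have exB: "\<exists>\<beta>. \<forall>b. poly (monom 1 m) b = (\<Sum>k\<le>N. \<beta> k * pf k b)" if "m \<le> N" for m
    using that by (intro basis) (simp add: degree_monom_eq)
  define B where "B m = (SOME \<beta>. \<forall>b. poly (monom 1 m) b = (\<Sum>k\<le>N. \<beta> k * pf k b))" for m
  have hB: "b ^ m = (\<Sum>k\<le>N. B m k * pf k b)" if "m \<le> N" for m b
  proof -
    have "\<forall>b. poly (monom 1 m) b = (\<Sum>k\<le>N. B m k * pf k b)"
      unfolding B_def by (rule someI_ex[OF exB[OF that]])
    then have "poly (monom 1 m) b = (\<Sum>k\<le>N. B m k * pf k b)" by blast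
    then show ?thesis by (simp add: poly_monom)
  qed
  define L where "L = {ks. length ks = length fs \<and> (\<forall>i<length fs. ks!i \<in> {..N})}"
  have finL: "finite L" unfolding L_def by (rule lists_fin)
  define G where "G ks = (\<Sum>e\<in>E. c e * (\<Prod>i<length fs. B (e!i) (ks!i)))" for ks
  have expand: "mpoly_eval E c bs = (\<Sum>ks\<in>L. G ks * PF ks bs)" if l: "length bs = length fs" for bs
  proof -
    have "mpoly_eval E c bs = (\<Sum>e\<in>E. c e * (\<Prod>i<length fs. (bs!i) ^ (e!i)))"
      unfolding mpoly_eval_def using l by simp
    also have "\<dots> = (\<Sum>e\<in>E. c e * (\<Sum>ks\<in>L. (\<Prod>i<length fs. B (e!i) (ks!i)) * PF ks bs))"
    proof (intro sum.cong refl arg_cong2[where f="(*)"])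
      fix e assume e: "e \<in> E"
      have "(\<Prod>i<length fs. (bs!i) ^ (e!i)) = (\<Prod>i<length fs. \<Sum>k\<in>{..N}. B (e!i) k * pf k (bs!i))"
      proof (rule prod.cong[OF refl])
        fix i assume "i \<in> {..<length fs}"
        then have "e!i \<le> N" using eN[OF e] by simp
        then show "(bs!i) ^ (e!i) = (\<Sum>k\<in>{..N}. B (e!i) k * pf k (bs!i))" by (rule hB)
      qed
      also have "\<dots> = (\<Sum>ks\<in>L. \<Prod>i<length fs. B (e!i) (ks!i) * pf (ks!i) (bs!i))"
        unfolding L_def by (rule prod_sum_lists[symmetric]) simp
      also have "\<dots> = (\<Sum>ks\<in>L. (\<Prod>i<length fs. B (e!i) (ks!i)) * PF ks bs)"
        unfolding PF_def by (simp add: prod.distrib)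
      finally show "(\<Prod>i<length fs. (bs!i) ^ (e!i)) = (\<Sum>ks\<in>L. (\<Prod>i<length fs. B (e!i) (ks!i)) * PF ks bs)" .
    qed
    also have "\<dots> = (\<Sum>ks\<in>L. G ks * PF ks bs)"
      unfolding G_def by (simp add: sum_distrib_left sum_distrib_right mult.assoc sum.swap[of _ E L])
    finally show ?thesis .
  qed
  have BoxL: "Box \<subseteq> L"
  proof
    fix ks assume ks: "ks \<in> Box"
    have "ks!i \<le> N" if "i < length fs" for i
    proof -
      have "ks!i < mu i" using ks that unfolding Box_def by simp
      then show ?thesis using mu_le(2)[of i] unfolding N_def by simp
    qed
    then show "ks \<in> L" using ks unfolding L_def Box_def by auto
  qed
  define C where "C = (\<lambda>ks\<in>Box. G ks mod mm ks)"
  have CR: "C \<in> PiE Box R" unfolding C_def R_def by (rule restrict_PiE_iff[THEN iffD2]) simp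
  have "h = Phi C"
  proof (rule PiE_ext[OF h Phi_PiE])
    fix bs assume bs: "bs \<in> dom_res fs"
    have l: "length bs = length fs" using bs unfolding dom_res_def by simp
    have "degree (h bs) < degree g" using h bs unfolding res_sys_def by auto
    then have "h bs = h bs mod g" by (simp add: mod_poly_less)
    also have "\<dots> = mpoly_eval E c bs mod g" using hE bs by simp
    also have "\<dots> = (\<Sum>ks\<in>L. G ks * PF ks bs) mod g" using expand[OF l] by simp
    also have "\<dots> = (\<Sum>ks\<in>Box. C ks * PF ks bs) mod g"
    proof -
      have split: "(\<Sum>ks\<in>L. G ks * PF ks bs) =
          (\<Sum>ks\<in>L - Box. G ks * PF ks bs) + (\<Sum>ks\<in>Box. G ks * PF ks bs)"
        using BoxL finL by (rule sum.subset_diff)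
      have d1: "g dvd (\<Sum>ks\<in>L - Box. G ks * PF ks bs)"
      proof (rule dvd_sum)
        fix ks assume ks: "ks \<in> L - Box"
        then have "length ks = length fs" "ks \<notin> Box" unfolding L_def by auto
        then have "g dvd PF ks bs" by (rule vanish[OF bs])
        then show "g dvd G ks * PF ks bs" by simp
      qed
      have d2: "g dvd (\<Sum>ks\<in>Box. G ks * PF ks bs) - (\<Sum>ks\<in>Box. C ks * PF ks bs)"
      proof -
        have "(\<Sum>ks\<in>Box. G ks * PF ks bs) - (\<Sum>ks\<in>Box. C ks * PF ks bs) =
            (\<Sum>ks\<in>Box. (G ks div mm ks) * (mm ks * PF ks bs))"
        proof -
          have "(\<Sum>ks\<in>Box. G ks * PF ks bs) - (\<Sum>ks\<in>Box. C ks * PF ks bs) =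
              (\<Sum>ks\<in>Box. (G ks - G ks mod mm ks) * PF ks bs)"
          proof -
            have "(\<Sum>ks\<in>Box. C ks * PF ks bs) = (\<Sum>ks\<in>Box. (G ks mod mm ks) * PF ks bs)"
              by (intro sum.cong refl) (simp add: C_def)
            then show ?thesis by (simp add: left_diff_distrib sum_subtractf)
          qed
          also have "\<dots> = (\<Sum>ks\<in>Box. (G ks div mm ks) * (mm ks * PF ks bs))"
            by (intro sum.cong refl) (subst minus_mod_eq_mult_div, simp add: ac_simps)
          finally show ?thesis .
        qed
        moreover have "g dvd (\<Sum>ks\<in>Box. (G ks div mm ks) * (mm ks * PF ks bs))"
          by (intro dvd_sum dvd_mult[OF g_dvd_mm])
        ultimately show ?thesis by simp
      qed
      have "g dvd (\<Sum>ks\<in>L - Box. G ks * PF ks bs) + ((\<Sum>ks\<in>Box. G ks * PF ks bs) - (\<Sum>ks\<in>Box. C ks * PF ks bs))"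
        using d1 d2 by (rule dvd_add)
      then have "g dvd (\<Sum>ks\<in>L - Box. G ks * PF ks bs) + (\<Sum>ks\<in>Box. G ks * PF ks bs) - (\<Sum>ks\<in>Box. C ks * PF ks bs)"
        by (simp only: add_diff_eq)
      then have "g dvd (\<Sum>ks\<in>L. G ks * PF ks bs) - (\<Sum>ks\<in>Box. C ks * PF ks bs)"
        by (simp only: split[symmetric])
      then show ?thesis by (simp add: mod_eq_dvd_iff)
    qed
    also have "\<dots> = Phi C bs" unfolding Phi_def using bs by simp
    finally show "h bs = Phi C bs" .
  qed
  then show ?thesis using CR by blast
qed

lemma count_main: "num_poly_functions fs g = (\<Prod>ks\<in>Box. card (UNIV::'a set) ^ degree (mm ks))"
proof -
  have "{h \<in> dom_res fs \<rightarrow>\<^sub>E res_sys g. is_poly_function fs g h} = Phi ` PiE Box R"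
  proof (intro equalityI subsetI)
    fix h assume "h \<in> {h \<in> dom_res fs \<rightarrow>\<^sub>E res_sys g. is_poly_function fs g h}"
    then show "h \<in> Phi ` PiE Box R" using Phi_onto by simp
  next
    fix h assume "h \<in> Phi ` PiE Box R"
    then obtain C where "h = Phi C" by blast
    then show "h \<in> {h \<in> dom_res fs \<rightarrow>\<^sub>E res_sys g. is_poly_function fs g h}"
      using Phi_PiE Phi_poly by simp
  qed
  then have "num_poly_functions fs g = card (Phi ` PiE Box R)" unfolding num_poly_functions_def by simp
  also have "\<dots> = card (PiE Box R)" using Phi_inj by (rule card_image)
  also have "\<dots> = (\<Prod>ks\<in>Box. card (R ks))" using Box_fin by (rule card_PiE)
  also have "\<dots> = (\<Prod>ks\<in>Box. card (UNIV::'a set) ^ degree (mm ks))" by (simp add: R_card)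
  finally show ?thesis .
qed

end

theorem mainTheorem8:
  fixes enum :: "nat \<Rightarrow> 'a::{field_gcd,finite}"
    and fs :: "'a poly list" and g :: "'a poly"
  assumes "bij_betw enum {..<card (UNIV :: 'a set)} (UNIV :: 'a set)"
    and "enum 0 = 0"
    and "fs \<noteq> []"
    and "\<forall>f\<in>set fs. 0 < degree f"
    and "0 < degree g"
  shows "num_poly_functions fs g =
    (\<Prod>ks\<in>{ks. length ks = length fs \<and> (\<forall>i<length fs. ks ! i < mu_fn enum (fs ! i) g)}.
       card (UNIV :: 'a set) ^ degree (g div gcd g
         (\<Prod>i<length fs. \<Prod>j<ks ! i. a_poly enum (ks ! i) - a_poly enum j)))"
proof -
  interpret msetup enum fs g
    using assms by unfold_locales auto
  show ?thesis
    using count_main unfolding Box_def mu_def mm_def FK_def afact_def by simp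
qed

end
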